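(* Let $G$ be a $k$-regular $1$-nearly platonic graph with $k\ge 3$. Then every cut-vertex of $G$ lies on the boundary of the exceptional face of $G$.
   Context: A $1$-nearly platonic graph is a finite, connected, simple, regular plane graph with $f\ge 2$ faces such that $f-1$ of its faces all have the same length $d_1$ and the remaining face (the exceptional face) has length $d_2\ne d_1$, where $d_1,d_2\ge 3$. The length of a face is the total length of the closed walk(s) bounding it (a cut-edge contributes twice). *)

theory Defs
  imports "HOL-Combinatorics.Permutations" "HOL-Combinatorics.Orbits"
begin

text \<open>Plane graphs are represented combinatorially as combinatorial maps
(rotation systems): a finite set of darts D (half-edges), a fixed-point-free
involution alpha on D (the two darts of an edge) and a permutation sigma on D
(cyclic order of darts around each vertex). A connected map
is plane (genus 0) iff V - E + F = 2.\<close>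

definition comb_map :: "'d set \<Rightarrow> ('d \<Rightarrow> 'd) \<Rightarrow> ('d \<Rightarrow> 'd) \<Rightarrow> bool" where
  "comb_map D \<alpha> \<sigma> \<longleftrightarrow> finite D \<and> \<alpha> permutes D \<and> \<sigma> permutes D \<and>
     (\<forall>d\<in>D. \<alpha> (\<alpha> d) = d \<and> \<alpha> d \<noteq> d)"

definition face_perm :: "('d \<Rightarrow> 'd) \<Rightarrow> ('d \<Rightarrow> 'd) \<Rightarrow> 'd \<Rightarrow> 'd" where
  "face_perm \<alpha> \<sigma> = \<sigma> \<circ> \<alpha>"

definition map_verts :: "'d set \<Rightarrow> ('d \<Rightarrow> 'd) \<Rightarrow> 'd set set" where
  "map_verts D \<sigma> = orbit \<sigma> ` D"

definition map_edges :: "'d set \<Rightarrow> ('d \<Rightarrow> 'd) \<Rightarrow> 'd set set" where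
  "map_edges D \<alpha> = orbit \<alpha> ` D"

definition map_faces :: "'d set \<Rightarrow> ('d \<Rightarrow> 'd) \<Rightarrow> ('d \<Rightarrow> 'd) \<Rightarrow> 'd set set" where
  "map_faces D \<alpha> \<sigma> = orbit (face_perm \<alpha> \<sigma>) ` D"

text \<open>Length of a face = number of darts in its boundary walk(s)
(a cut-edge contributes twice).\<close>
definition face_length :: "'d set \<Rightarrow> nat" where
  "face_length F = card F"

definition map_adj :: "'d set \<Rightarrow> ('d \<Rightarrow> 'd) \<Rightarrow> ('d \<Rightarrow> 'd) \<Rightarrow> 'd set \<Rightarrow> 'd set \<Rightarrow> bool" where
  "map_adj D \<alpha> \<sigma> u v \<longleftrightarrow> (\<exists>d\<in>D. orbit \<sigma> d = u \<and> orbit \<sigma> (\<alpha> d) = v)"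

definition map_simple :: "'d set \<Rightarrow> ('d \<Rightarrow> 'd) \<Rightarrow> ('d \<Rightarrow> 'd) \<Rightarrow> bool" where
  "map_simple D \<alpha> \<sigma> \<longleftrightarrow>
     (\<forall>d\<in>D. orbit \<sigma> (\<alpha> d) \<noteq> orbit \<sigma> d) \<and>
     (\<forall>d\<in>D. \<forall>d'\<in>D. orbit \<sigma> d' = orbit \<sigma> d \<and> orbit \<sigma> (\<alpha> d') = orbit \<sigma> (\<alpha> d) \<longrightarrow> d' = d)"

definition connected_on :: "'d set \<Rightarrow> ('d \<Rightarrow> 'd) \<Rightarrow> ('d \<Rightarrow> 'd) \<Rightarrow> 'd set set \<Rightarrow> bool" where
  "connected_on D \<alpha> \<sigma> W \<longleftrightarrow>
     (\<forall>u\<in>W. \<forall>v\<in>W. (\<lambda>x y. x \<in> W \<and> y \<in> W \<and> map_adj D \<alpha> \<sigma> x y)\<^sup>*\<^sup>* u v)"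

definition map_connected :: "'d set \<Rightarrow> ('d \<Rightarrow> 'd) \<Rightarrow> ('d \<Rightarrow> 'd) \<Rightarrow> bool" where
  "map_connected D \<alpha> \<sigma> \<longleftrightarrow> connected_on D \<alpha> \<sigma> (map_verts D \<sigma>)"

definition plane_graph :: "'d set \<Rightarrow> ('d \<Rightarrow> 'd) \<Rightarrow> ('d \<Rightarrow> 'd) \<Rightarrow> bool" where
  "plane_graph D \<alpha> \<sigma> \<longleftrightarrow> comb_map D \<alpha> \<sigma> \<and> map_simple D \<alpha> \<sigma> \<and> map_connected D \<alpha> \<sigma> \<and>
     int (card (map_verts D \<sigma>)) - int (card (map_edges D \<alpha>)) + int (card (map_faces D \<alpha> \<sigma>)) = 2"

definition map_regular :: "'d set \<Rightarrow> ('d \<Rightarrow> 'd) \<Rightarrow> nat \<Rightarrow> bool" where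
  "map_regular D \<sigma> k \<longleftrightarrow> (\<forall>v\<in>map_verts D \<sigma>. card v = k)"

definition one_nearly_platonic ::
  "'d set \<Rightarrow> ('d \<Rightarrow> 'd) \<Rightarrow> ('d \<Rightarrow> 'd) \<Rightarrow> 'd set \<Rightarrow> nat \<Rightarrow> nat \<Rightarrow> bool" where
  "one_nearly_platonic D \<alpha> \<sigma> F0 d1 d2 \<longleftrightarrow>
     plane_graph D \<alpha> \<sigma> \<and> (\<exists>k. map_regular D \<sigma> k) \<and>
     card (map_faces D \<alpha> \<sigma>) \<ge> 2 \<and> d1 \<ge> 3 \<and> d2 \<ge> 3 \<and> d1 \<noteq> d2 \<and>
     F0 \<in> map_faces D \<alpha> \<sigma> \<and> face_length F0 = d2 \<and>
     (\<forall>F\<in>map_faces D \<alpha> \<sigma>. F \<noteq> F0 \<longrightarrow> face_length F = d1)"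

definition cut_vertex :: "'d set \<Rightarrow> ('d \<Rightarrow> 'd) \<Rightarrow> ('d \<Rightarrow> 'd) \<Rightarrow> 'd set \<Rightarrow> bool" where
  "cut_vertex D \<alpha> \<sigma> v \<longleftrightarrow> v \<in> map_verts D \<sigma> \<and>
     \<not> connected_on D \<alpha> \<sigma> (map_verts D \<sigma> - {v})"

definition on_face :: "('d \<Rightarrow> 'd) \<Rightarrow> 'd set \<Rightarrow> 'd set \<Rightarrow> bool" where
  "on_face \<sigma> v F \<longleftrightarrow> (\<exists>d\<in>F. orbit \<sigma> d = v)"

end

theory Submission
  imports Defs
begin

lemma perm_orb:
  assumes "p permutes S" "finite S"
  shows perm_orb_self: "x \<in> orbit p x"
    and perm_orb_step: "orbit p (p x) = orbit p x"
    and perm_orb_eq: "y \<in> orbit p x \<Longrightarrow> orbit p y = orbit p x"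
proof -
  have pm: "permutation p" using assms permutation_permutes by blast
  show "x \<in> orbit p x" by (rule permutation_self_in_orbit[OF pm])
  show "orbit p (p x) = orbit p x" by (rule permutation_orbit_step[OF pm])
  show "y \<in> orbit p x \<Longrightarrow> orbit p y = orbit p x"
    using cyclic_on_orbit'[OF pm] orbit_cyclic_eq3 by metis
qed

lemma card_orbits:
  assumes "p permutes S" "finite S"
  shows "card S = (\<Sum>X\<in>orbit p ` S. card X)"
proof -
  have U: "\<Union>(orbit p ` S) = S"
    using permutes_orbit_subset[OF assms(1)] perm_orb_self[OF assms] by blast
  have "card (\<Union>(orbit p ` S)) = (\<Sum>X\<in>orbit p ` S. card X)"
  proof (rule card_Union_disjoint)
    show "pairwise disjnt (orbit p ` S)"
      unfolding pairwise_def disjnt_def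
      using perm_orb_eq[OF assms] by blast
    show "\<And>A. A \<in> orbit p ` S \<Longrightarrow> finite A"
      using permutes_orbit_subset[OF assms(1)] assms(2) finite_subset by blast
  qed
  then show ?thesis using U by simp
qed

lemma card_orbits_const:
  assumes "p permutes S" "finite S" "\<And>x. x \<in> S \<Longrightarrow> card (orbit p x) = c"
  shows "card S = c * card (orbit p ` S)"
proof -
  have "card S = (\<Sum>X\<in>orbit p ` S. card X)" by (rule card_orbits[OF assms(1,2)])
  also have "\<dots> = (\<Sum>X\<in>orbit p ` S. c)" using assms(3) by (intro sum.cong) auto
  finally show ?thesis by simp
qed

lemma transition:
  "\<not> P x \<Longrightarrow> P ((f ^^ n) x) \<Longrightarrow> \<exists>m<n. \<not> P ((f ^^ m) x) \<and> P ((f ^^ Suc m) x)"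
proof (induction n)
  case 0 then show ?case by simp
next
  case (Suc n)
  show ?case
  proof (cases "P ((f ^^ n) x)")
    case True then show ?thesis using Suc by (metis less_Suc_eq)
  next
    case False then show ?thesis using Suc.prems by auto
  qed
qed

lemma count_bound:
  assumes "one_nearly_platonic D \<alpha> \<sigma> F0 d1 d2"
    and "map_regular D \<sigma> k" and "k \<ge> 3"
  shows "d1 < 6"
proof (rule ccontr)
  assume "\<not> d1 < 6"
  then have d16: "d1 \<ge> 6" by simp
  from assms(1) have pg: "plane_graph D \<alpha> \<sigma>" and f2: "card (map_faces D \<alpha> \<sigma>) \<ge> 2"
    and d2: "d2 \<ge> 3" and F0: "F0 \<in> map_faces D \<alpha> \<sigma>" "face_length F0 = d2"
    and Fo: "\<forall>F\<in>map_faces D \<alpha> \<sigma>. F \<noteq> F0 \<longrightarrow> face_length F = d1"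
    unfolding one_nearly_platonic_def by auto
  from pg have cm: "comb_map D \<alpha> \<sigma>" and eu: "int (card (map_verts D \<sigma>)) - int (card (map_edges D \<alpha>)) + int (card (map_faces D \<alpha> \<sigma>)) = 2"
    unfolding plane_graph_def by auto
  from cm have fin: "finite D" and ap: "\<alpha> permutes D" and sp: "\<sigma> permutes D"
    and inv: "\<And>d. d \<in> D \<Longrightarrow> \<alpha> (\<alpha> d) = d \<and> \<alpha> d \<noteq> d"
    unfolding comb_map_def by auto
  have php: "face_perm \<alpha> \<sigma> permutes D" unfolding face_perm_def
    using permutes_compose[OF ap sp] .
  have nV: "card D = k * card (map_verts D \<sigma>)"
    unfolding map_verts_def
    using assms(2) unfolding map_regular_def map_verts_def
    by (intro card_orbits_const[OF sp fin]) auto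
  have o2: "card (orbit \<alpha> x) = 2" if "x \<in> D" for x
  proof -
    have "(\<alpha> ^^ 2) x = x" using inv[OF that] by (simp add: numeral_2_eq_2)
    then have "orbit \<alpha> x = {(\<alpha> ^^ m) x | m. m < 2}" by (intro orbit_altdef_bounded) auto
    also have "\<dots> = {x, \<alpha> x}"
    proof (auto simp: numeral_2_eq_2 less_Suc_eq)
      show "\<exists>m. x = (\<alpha> ^^ m) x \<and> (m = 0 \<or> m = Suc 0)" by (rule exI[of _ 0]) simp
      show "\<exists>m. \<alpha> x = (\<alpha> ^^ m) x \<and> (m = 0 \<or> m = Suc 0)" by (rule exI[of _ 1]) simp
    qed
    finally show ?thesis using inv[OF that] by (auto simp add: card_insert_if)
  qed
  have nE: "card D = 2 * card (map_edges D \<alpha>)"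
    unfolding map_edges_def using o2 by (intro card_orbits_const[OF ap fin]) auto
  have finF: "finite (map_faces D \<alpha> \<sigma>)" unfolding map_faces_def using fin by simp
  have "card D = (\<Sum>X\<in>map_faces D \<alpha> \<sigma>. card X)"
    unfolding map_faces_def by (rule card_orbits[OF php fin])
  also have "\<dots> = card F0 + (\<Sum>X\<in>map_faces D \<alpha> \<sigma> - {F0}. card X)"
    using sum.remove[OF finF F0(1)] .
  also have "(\<Sum>X\<in>map_faces D \<alpha> \<sigma> - {F0}. card X) = (\<Sum>X\<in>map_faces D \<alpha> \<sigma> - {F0}. d1)"
    using Fo unfolding face_length_def by (intro sum.cong) auto
  finally have nF: "card D = d2 + (card (map_faces D \<alpha> \<sigma>) - 1) * d1"
    using F0(1,2) finF unfolding face_length_def by simp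
  define V where "V = card (map_verts D \<sigma>)"
  define E where "E = card (map_edges D \<alpha>)"
  define F where "F = card (map_faces D \<alpha> \<sigma>)"
  have a1: "3 * V \<le> k * V" using assms(3) by simp
  have a2: "6 * (F - 1) \<le> d1 * (F - 1)" using d16 by simp
  have "int (card D) = int k * int V" using nV V_def by simp
  moreover have "int (card D) = 2 * int E" using nE E_def by simp
  moreover have "int (card D) = int d2 + int d1 * (int F - 1)"
  proof -
    have "card D = d2 + d1 * (F - 1)" using nF F_def by (simp add: mult.commute)
    then have "int (card D) = int d2 + int d1 * int (F - 1)" by simp
    then show ?thesis using f2 F_def by (simp add: of_nat_diff)
  qed
  moreover have "int V - int E + int F = 2" using eu V_def E_def F_def by simp
  moreover have "3 * int V \<le> int k * int V"
  proof -
    have "int (3 * V) \<le> int (k * V)" using a1 by (simp only: of_nat_le_iff)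
    then show ?thesis by simp
  qed
  moreover have "6 * (int F - 1) \<le> int d1 * (int F - 1)"
  proof -
    have "int (6 * (F - 1)) \<le> int (d1 * (F - 1))" using a2 by (simp only: of_nat_le_iff)
    then show ?thesis using f2 F_def by (simp add: of_nat_diff)
  qed
  moreover have X: "\<And>DD VV EE FF P Q dd::int. DD = Q \<Longrightarrow> DD = 2*EE \<Longrightarrow> DD = dd + P \<Longrightarrow>
     VV - EE + FF = 2 \<Longrightarrow> 3*VV \<le> Q \<Longrightarrow> 6*(FF-1) \<le> P \<Longrightarrow> 3 \<le> dd \<Longrightarrow> False"
    by presburger
  moreover have "3 \<le> int d2" using d2 by simp
  ultimately show False by blast
qed


theorem mainTheorem6:
  fixes D :: "'d set" and \<alpha> \<sigma> :: "'d \<Rightarrow> 'd" and k d1 d2 :: nat and F0 v :: "'d set"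
  assumes "one_nearly_platonic D \<alpha> \<sigma> F0 d1 d2"
    and "map_regular D \<sigma> k" and "k \<ge> 3"
    and "cut_vertex D \<alpha> \<sigma> v"
  shows "on_face \<sigma> v F0"
proof (rule ccontr)
  assume nf: "\<not> on_face \<sigma> v F0"
  have d1lt: "d1 < 6" by (rule count_bound[OF assms(1-3)])
  from assms(1) have pg: "plane_graph D \<alpha> \<sigma>"
    and F0: "F0 \<in> map_faces D \<alpha> \<sigma>"
    and Fo: "\<forall>F\<in>map_faces D \<alpha> \<sigma>. F \<noteq> F0 \<longrightarrow> face_length F = d1"
    unfolding one_nearly_platonic_def by auto
  from pg have cm: "comb_map D \<alpha> \<sigma>" and ms: "map_simple D \<alpha> \<sigma>" and mc: "map_connected D \<alpha> \<sigma>"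
    unfolding plane_graph_def by auto
  from cm have fin: "finite D" and ap: "\<alpha> permutes D" and sp: "\<sigma> permutes D"
    and inv: "\<And>d. d \<in> D \<Longrightarrow> \<alpha> (\<alpha> d) = d \<and> \<alpha> d \<noteq> d"
    unfolding comb_map_def by auto
  have aa: "\<And>d. d \<in> D \<Longrightarrow> \<alpha> (\<alpha> d) = d" using inv by blast
  have aD: "\<And>d. d \<in> D \<Longrightarrow> \<alpha> d \<in> D" using permutes_in_image[OF ap] by blast
  have sD: "\<And>d. d \<in> D \<Longrightarrow> \<sigma> d \<in> D" using permutes_in_image[OF sp] by blast
  have noloop: "\<And>d. d \<in> D \<Longrightarrow> orbit \<sigma> (\<alpha> d) \<noteq> orbit \<sigma> d"
    using ms unfolding map_simple_def by blast
  have simp2: "\<And>d d'. d \<in> D \<Longrightarrow> d' \<in> D \<Longrightarrow> orbit \<sigma> d' = orbit \<sigma> d \<Longrightarrow>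
      orbit \<sigma> (\<alpha> d') = orbit \<sigma> (\<alpha> d) \<Longrightarrow> d' = d"
    using ms unfolding map_simple_def by blast
  have tstep: "\<And>d. orbit \<sigma> (\<sigma> d) = orbit \<sigma> d" by (rule perm_orb_step[OF sp fin])
  have reg: "\<And>d. d \<in> D \<Longrightarrow> card (orbit \<sigma> d) = k"
    using assms(2) unfolding map_regular_def map_verts_def by blast
  have nofix: "\<sigma> d \<noteq> d" if "d \<in> D" for d
  proof
    assume "\<sigma> d = d"
    then have "orbit \<sigma> d = {d}" using orbit_eq_singleton_iff by metis
    then show False using reg[OF that] assms(3) by simp
  qed
  have vert: "\<And>d. d \<in> D \<Longrightarrow> orbit \<sigma> d \<in> map_verts D \<sigma>" by (simp add: map_verts_def)
  have adjI: "\<And>d. d \<in> D \<Longrightarrow> map_adj D \<alpha> \<sigma> (orbit \<sigma> d) (orbit \<sigma> (\<alpha> d))"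
    unfolding map_adj_def by blast
  have adjsym: "map_adj D \<alpha> \<sigma> y x" if "map_adj D \<alpha> \<sigma> x y" for x y
  proof -
    from that obtain d where "d \<in> D" "orbit \<sigma> d = x" "orbit \<sigma> (\<alpha> d) = y"
      unfolding map_adj_def by blast
    then show ?thesis using adjI[of "\<alpha> d"] aD aa by metis
  qed
  define W where "W = map_verts D \<sigma> - {v}"
  define B where "B = (\<lambda>x y. x \<in> W \<and> y \<in> W \<and> map_adj D \<alpha> \<sigma> x y)"
  define R where "R = B\<^sup>*\<^sup>*"
  from assms(4) have vV: "v \<in> map_verts D \<sigma>" and nc: "\<not> connected_on D \<alpha> \<sigma> W"
    unfolding cut_vertex_def W_def by auto
  then obtain u w where uW: "u \<in> W" and wW: "w \<in> W" and nuw: "\<not> R u w"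
    unfolding connected_on_def R_def B_def by blast
  have Bsym: "B y x" if "B x y" for x y using that adjsym unfolding B_def by blast
  have Rsym: "R y x" if "R x y" for x y
    using that unfolding R_def
  proof (induction rule: rtranclp_induct)
    case base then show ?case by simp
  next
    case (step y z) then show ?case using Bsym converse_rtranclp_into_rtranclp by metis
  qed
  have Rin: "x \<in> W" if "R a x" "a \<in> W" for a x
    using that unfolding R_def
  proof (induction rule: rtranclp_induct)
    case base then show ?case by simp
  next
    case (step y z) then show ?case unfolding B_def by blast
  qed
  have CL: "R a (orbit \<sigma> (\<alpha> d))"
    if "a \<in> W" "R a (orbit \<sigma> d)" "d \<in> D" "orbit \<sigma> (\<alpha> d) \<noteq> v" for a d
  proof -
    have "orbit \<sigma> d \<in> W" using Rin that by blast
    moreover have "orbit \<sigma> (\<alpha> d) \<in> W" using that vert aD unfolding W_def by blast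
    ultimately have "B (orbit \<sigma> d) (orbit \<sigma> (\<alpha> d))" using adjI that unfolding B_def by blast
    then show ?thesis using that(2) unfolding R_def by (metis rtranclp.rtrancl_into_rtrancl)
  qed
  have KL: "\<exists>d\<in>D. orbit \<sigma> d = v \<and> R a (orbit \<sigma> (\<alpha> d))"
    if aW: "a \<in> W" and bW: "b \<in> W" and nab: "\<not> R a b" for a b
  proof (rule ccontr)
    assume H: "\<not> (\<exists>d\<in>D. orbit \<sigma> d = v \<and> R a (orbit \<sigma> (\<alpha> d)))"
    define G where "G = (\<lambda>x y. x \<in> map_verts D \<sigma> \<and> y \<in> map_verts D \<sigma> \<and> map_adj D \<alpha> \<sigma> x y)"
    have "R a y" if "G\<^sup>*\<^sup>* a y" for y
      using that
    proof (induction rule: rtranclp_induct)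
      case base then show ?case unfolding R_def by simp
    next
      case (step x y)
      have xW: "x \<in> W" using Rin step.IH aW by blast
      from step.hyps(2) obtain d where d: "d \<in> D" "orbit \<sigma> d = x" "orbit \<sigma> (\<alpha> d) = y"
        and yV: "y \<in> map_verts D \<sigma>"
        unfolding G_def map_adj_def by blast
      show ?case
      proof (cases "y = v")
        case True
        then have "\<alpha> d \<in> D \<and> orbit \<sigma> (\<alpha> d) = v \<and> R a (orbit \<sigma> (\<alpha> (\<alpha> d)))"
          using d aD aa step.IH by simp
        then show ?thesis using H by blast
      next
        case False
        then have "y \<in> W" using yV unfolding W_def by blast
        then have "B x y" using xW step.hyps(2) unfolding B_def G_def by blast
        then show ?thesis using step.IH unfolding R_def by (metis rtranclp.rtrancl_into_rtrancl)
      qed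
    qed
    moreover have "G\<^sup>*\<^sup>* a b" using mc aW bW unfolding map_connected_def connected_on_def G_def W_def by blast
    ultimately show False using nab by blast
  qed
  obtain d where dD: "d \<in> D" and dv: "orbit \<sigma> d = v" and dC: "R u (orbit \<sigma> (\<alpha> d))"
    using KL[OF uW wW nuw] by blast
  have "\<not> R w u" using nuw Rsym by blast
  then obtain d' where d'D: "d' \<in> D" and d'v: "orbit \<sigma> d' = v" and d'C: "R w (orbit \<sigma> (\<alpha> d'))"
    using KL[OF wW uW] by blast
  have nd'C: "\<not> R u (orbit \<sigma> (\<alpha> d'))"
  proof
    assume "R u (orbit \<sigma> (\<alpha> d'))"
    moreover have "R (orbit \<sigma> (\<alpha> d')) w" using d'C Rsym by blast
    ultimately have "R u w" unfolding R_def by (rule rtranclp_trans)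
    then show False using nuw by blast
  qed
  have "d \<in> orbit \<sigma> d'" using perm_orb_self[OF sp fin, of d] dv d'v by simp
  then obtain n where "d = (\<sigma> ^^ n) d'"
    using orbit_altdef_permutation[of \<sigma> d'] sp fin permutation_permutes by blast
  then obtain m where m1: "\<not> R u (orbit \<sigma> (\<alpha> ((\<sigma> ^^ m) d')))"
    and m2: "R u (orbit \<sigma> (\<alpha> ((\<sigma> ^^ Suc m) d')))"
    using transition[of "\<lambda>x. R u (orbit \<sigma> (\<alpha> x))" d' n \<sigma>] nd'C dC by blast
  define e1 where "e1 = (\<sigma> ^^ m) d'"
  have e1o: "e1 \<in> orbit \<sigma> d'" unfolding e1_def
    using funpow_in_orbit perm_orb_self[OF sp fin] by metis
  have e1D: "e1 \<in> D" using e1o permutes_orbit_subset[OF sp d'D] by blast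
  have te1: "orbit \<sigma> e1 = v" using perm_orb_eq[OF sp fin e1o] d'v by simp
  define e2 where "e2 = \<sigma> e1"
  have e2D: "e2 \<in> D" using sD e1D e2_def by simp
  have te2: "orbit \<sigma> e2 = v" using tstep te1 e2_def by simp
  have he1: "\<not> R u (orbit \<sigma> (\<alpha> e1))" using m1 e1_def by simp
  have he2: "R u (orbit \<sigma> (\<alpha> e2))" using m2 e1_def e2_def by simp
  define \<phi> where "\<phi> = face_perm \<alpha> \<sigma>"
  have php: "\<phi> permutes D" unfolding \<phi>_def face_perm_def using permutes_compose[OF ap sp] .
  have phi: "\<And>x. \<phi> x = \<sigma> (\<alpha> x)" unfolding \<phi>_def face_perm_def by simp
  have phD: "\<And>x. x \<in> D \<Longrightarrow> \<phi> x \<in> D" using permutes_in_image[OF php] by blast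
  have ipD: "\<And>x. x \<in> D \<Longrightarrow> inv \<phi> x \<in> D" using permutes_in_image[OF permutes_inv[OF php]] by blast
  have phinv: "\<And>x. \<phi> (inv \<phi> x) = x" using permutes_inverses(1)[OF php] by blast
  have tphi: "\<And>x. orbit \<sigma> (\<phi> x) = orbit \<sigma> (\<alpha> x)" using phi tstep by simp
  define x0 where "x0 = e2"
  define x1 where "x1 = \<phi> x0"
  define x2 where "x2 = \<phi> x1"
  define y0 where "y0 = \<alpha> e1"
  define z1 where "z1 = inv \<phi> y0"
  define z2 where "z2 = inv \<phi> z1"
  have x0D: "x0 \<in> D" using e2D x0_def by simp
  have x1D: "x1 \<in> D" using phD x0D x1_def by simp
  have x2D: "x2 \<in> D" using phD x1D x2_def by simp
  have y0D: "y0 \<in> D" using aD e1D y0_def by simp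
  have z1D: "z1 \<in> D" using ipD y0D z1_def by simp
  have z2D: "z2 \<in> D" using ipD z1D z2_def by simp
  have pz1: "\<phi> z1 = y0" using phinv z1_def by simp
  have pz2: "\<phi> z2 = z1" using phinv z2_def by simp
  have py0: "\<phi> y0 = e2" using phi aa e1D y0_def e2_def by simp
  have tx1: "orbit \<sigma> x1 = orbit \<sigma> (\<alpha> e2)" using tphi x1_def x0_def by simp
  have hx1v: "orbit \<sigma> (\<alpha> x1) \<noteq> v"
  proof
    assume a: "orbit \<sigma> (\<alpha> x1) = v"
    have "\<alpha> x1 = e2"
      using simp2[OF e2D aD[OF x1D]] a te2 aa[OF x1D] tx1 by simp
    then have "x1 = \<alpha> e2" using aa[OF x1D] by metis
    then have "\<sigma> (\<alpha> e2) = \<alpha> e2" using x1_def x0_def phi by simp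
    then show False using nofix aD e2D by blast
  qed
  have Cx1: "R u (orbit \<sigma> x1)" using tx1 he2 by simp
  have Cx2: "R u (orbit \<sigma> x2)" using CL[OF uW Cx1 x1D hx1v] tphi x2_def by simp
  have x1v: "orbit \<sigma> x1 \<noteq> v" using Rin[OF Cx1 uW] W_def by blast
  have x2v: "orbit \<sigma> x2 \<noteq> v" using Rin[OF Cx2 uW] W_def by blast
  have tx2: "orbit \<sigma> x2 = orbit \<sigma> (\<alpha> x1)" using tphi x2_def by simp
  have ty0: "orbit \<sigma> y0 = orbit \<sigma> (\<alpha> e1)" using y0_def by simp
  have Cy0: "\<not> R u (orbit \<sigma> y0)" using ty0 he1 by simp
  have y0v: "orbit \<sigma> y0 \<noteq> v" using ty0 noloop[OF e1D] te1 by simp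
  have hy0: "orbit \<sigma> (\<alpha> y0) = v" using aa e1D y0_def te1 by simp
  have hz1: "orbit \<sigma> (\<alpha> z1) = orbit \<sigma> y0" using tphi[of z1] pz1 by simp
  have z1v: "orbit \<sigma> z1 \<noteq> v"
  proof
    assume a: "orbit \<sigma> z1 = v"
    have "z1 = e1" using simp2[OF e1D z1D] a te1 hz1 ty0 by simp
    then have "\<sigma> (\<alpha> e1) = \<alpha> e1" using pz1 phi y0_def by simp
    then show False using nofix aD e1D by blast
  qed
  have Cz1: "\<not> R u (orbit \<sigma> z1)"
  proof
    assume "R u (orbit \<sigma> z1)"
    from CL[OF uW this z1D] hz1 y0v Cy0 show False by simp
  qed
  have hz2: "orbit \<sigma> (\<alpha> z2) = orbit \<sigma> z1" using tphi[of z2] pz2 by simp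
  have Cz2: "\<not> R u (orbit \<sigma> z2)"
  proof
    assume "R u (orbit \<sigma> z2)"
    from CL[OF uW this z2D] hz2 z1v Cz1 show False by simp
  qed
  have hx0: "R u (orbit \<sigma> (\<alpha> x0))" using he2 x0_def by simp
  have tx0: "orbit \<sigma> x0 = v" using te2 x0_def by simp
  have nl1: "orbit \<sigma> (\<alpha> x1) \<noteq> orbit \<sigma> x1" using noloop x1D by blast
  have nl2: "orbit \<sigma> (\<alpha> z1) \<noteq> orbit \<sigma> z1" using noloop z1D by blast
  have nl3: "orbit \<sigma> (\<alpha> z2) \<noteq> orbit \<sigma> z2" using noloop z2D by blast
  have dist: "distinct [x0, x1, x2, y0, z1, z2]"
  proof -
    have "x0 \<noteq> x1" "x0 \<noteq> x2" "x0 \<noteq> y0" "x0 \<noteq> z1" using tx0 x1v x2v y0v z1v by auto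
    moreover have "x0 \<noteq> z2" using hx0 hz2 Cz1 by auto
    moreover have "x1 \<noteq> x2" using tx2 nl1 by auto
    moreover have "x1 \<noteq> y0" "x1 \<noteq> z1" "x1 \<noteq> z2" using Cx1 Cy0 Cz1 Cz2 by auto
    moreover have "x2 \<noteq> y0" "x2 \<noteq> z1" "x2 \<noteq> z2" using Cx2 Cy0 Cz1 Cz2 by auto
    moreover have "y0 \<noteq> z1" using hz1 nl2 by auto
    moreover have "y0 \<noteq> z2" using hy0 hz2 z1v by auto
    moreover have "z1 \<noteq> z2" using hz2 nl3 by auto
    ultimately show ?thesis by auto
  qed
  define F where "F = orbit \<phi> e2"
  have oy0: "orbit \<phi> y0 = F" using perm_orb_step[OF php fin, of y0] py0 F_def by simp
  have oz1: "orbit \<phi> z1 = F" using perm_orb_step[OF php fin, of z1] pz1 oy0 by simp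
  have oz2: "orbit \<phi> z2 = F" using perm_orb_step[OF php fin, of z2] pz2 oz1 by simp
  have sub: "{x0, x1, x2, y0, z1, z2} \<subseteq> F"
  proof -
    have "x0 \<in> F" using perm_orb_self[OF php fin] F_def x0_def by simp
    moreover have "x1 \<in> F" using F_def x1_def x0_def by (simp add: orbit.base)
    moreover have "x2 \<in> F" using F_def x2_def x1_def x0_def by (simp add: orbit.base orbit.step)
    moreover have "y0 \<in> F" "z1 \<in> F" "z2 \<in> F" using perm_orb_self[OF php fin] oy0 oz1 oz2 by metis+
    ultimately show ?thesis by blast
  qed
  have finF: "finite F" using permutes_orbit_subset[OF php e2D] fin F_def finite_subset by blast
  have "6 \<le> card F"
  proof -
    have "card {x0, x1, x2, y0, z1, z2} = 6" using dist by simp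
    then show ?thesis using card_mono[OF finF sub] by simp
  qed
  moreover have "F \<in> map_faces D \<alpha> \<sigma>" unfolding map_faces_def F_def \<phi>_def using e2D by blast
  moreover have "F \<noteq> F0"
  proof
    assume "F = F0"
    moreover have "on_face \<sigma> v F" unfolding on_face_def using perm_orb_self[OF php fin] F_def te2 by blast
    ultimately show False using nf by simp
  qed
  ultimately show False using Fo d1lt unfolding face_length_def by auto
qed

end
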